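(* Let $\eta\in\mathbb{R}\setminus\{0\}$, let $\varepsilon',\ell,\delta,\delta'>0$, let $A\in\mathrm{SL}(2,\mathbb{Z})$ and set $v=A(0,1)$. There exists $\xi_0=\xi_0(|\eta|,A,\ell,\varepsilon',\delta,\delta')\in\mathbb{N}^*$ with the following property. Let $X\subseteq\mathbb{R}^2$ be non-empty, let $\varepsilon>0$, and let $\gamma$ be a union of segments in $\mathbb{R}^2$ which is $\varepsilon$-dense in $X$, such that the direction of each segment of $\gamma$ is at distance greater than $\delta$ from the direction of $v$ on $\mathbb{S}^1$, and each segment of $\gamma$ has length greater than $\ell$. Then for every integer $\xi\ge\xi_0$ there exists a subset $\gamma'\subseteq A\circ J_{\eta,\xi}\circ A^{-1}(\gamma)$ which is a union of segments, is $(\varepsilon+\varepsilon')$-dense in $\mathrm{Str}(X,\eta v)$, whose segments have directions within distance $\delta'$ of the direction of $v$ on $\mathbb{S}^1$, and whose segments have lengths greater than $\|A^{-1}\|^{-1}|\eta|$.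
   Context: Directions of non-zero vectors of $\mathbb{R}^2$ are identified with the unit circle $\mathbb{S}^1$, equipped with the Riemannian metric induced by the Euclidean metric of $\mathbb{R}^2$. $\|\cdot\|$ is the operator norm. $X$ is $\varepsilon$-dense in $Y$ if $Y\subseteq B_\varepsilon(X)$ (open $\varepsilon$-neighbourhood). $\mathrm{Str}(X,w)=X+[-w,w]$ (Minkowski sum). For $\xi\in\mathbb{N}^*$, $\phi_\xi(x)=(-1)^{z+1}(4\xi x-2z-1)$ for $z\in\mathbb{Z}$, $x\in[\frac{z}{2\xi},\frac{z+1}{2\xi})$, and $J_{\eta,\xi}(x,y)=(x,y+\eta\phi_\xi(x))$. *)

theory Defs
  imports "HOL-Analysis.Analysis"
begin

type_synonym pt = "real^2"

text \<open>Geodesic distance on the unit circle between the directions of two non-zero vectors.\<close>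
definition dir_dist :: "pt \<Rightarrow> pt \<Rightarrow> real" where
  "dir_dist u w = arccos ((u \<bullet> w) / (norm u * norm w))"

text \<open>X is eps-dense in Y: Y is contained in the open eps-neighbourhood of X.\<close>
definition eps_dense :: "real \<Rightarrow> pt set \<Rightarrow> pt set \<Rightarrow> bool" where
  "eps_dense eps X Y \<longleftrightarrow> (\<forall>y\<in>Y. \<exists>x\<in>X. dist x y < eps)"

text \<open>Str(X,w) = X + [-w,w] (Minkowski sum).\<close>
definition Str :: "pt set \<Rightarrow> pt \<Rightarrow> pt set" where
  "Str X w = {x + y | x y. x \<in> X \<and> y \<in> closed_segment (-w) w}"

definition phi :: "nat \<Rightarrow> real \<Rightarrow> real" where
  "phi \<xi> x = (let z = \<lfloor>2 * real \<xi> * x\<rfloor> in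
      (-1::real) powi (z + 1) * (4 * real \<xi> * x - 2 * real_of_int z - 1))"

definition J :: "real \<Rightarrow> nat \<Rightarrow> pt \<Rightarrow> pt" where
  "J \<eta> \<xi> p = vector [p$1, p$2 + \<eta> * phi \<xi> (p$1)]"

text \<open>Union of a family of (non-degenerate) segments, given by endpoint pairs.\<close>
definition segs_union :: "(pt \<times> pt) set \<Rightarrow> pt set" where
  "segs_union S = (\<Union>(p,q)\<in>S. closed_segment p q)"

definition SL2Z :: "real^2^2 \<Rightarrow> bool" where
  "SL2Z A \<longleftrightarrow> (\<forall>i j. A$i$j \<in> \<int>) \<and> det A = 1"

end

theory Submission
  imports Defs
begin

lemma norm2_sq: "(norm (x::real^2))\<^sup>2 = (x$1)\<^sup>2 + (x$2)\<^sup>2"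
  unfolding power2_norm_eq_inner inner_vec_def sum_2 by (simp add: power2_eq_square)

lemma inner2: "(x::real^2) \<bullet> y = x$1 * y$1 + x$2 * y$2"
  by (simp add: inner_vec_def sum_2)

lemma mv1: "((A::real^2^2) *v x)$1 = A$1$1 * x$1 + A$1$2 * x$2"
  by (simp add: matrix_vector_mult_def sum_2)
lemma mv2: "((A::real^2^2) *v x)$2 = A$2$1 * x$1 + A$2$2 * x$2"
  by (simp add: matrix_vector_mult_def sum_2)

lemma J1: "(J \<eta> \<xi> p)$1 = p$1" by (simp add: J_def)
lemma J2: "(J \<eta> \<xi> p)$2 = p$2 + \<eta> * phi \<xi> (p$1)" by (simp add: J_def)

lemma vec2_eq: "((x::real^2) = y) \<longleftrightarrow> x$1 = y$1 \<and> x$2 = y$2"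
  by (simp add: vec_eq_iff forall_2)

lemma sgn_sq: "((-1::real) powi k)\<^sup>2 = 1"
  by (metis power_int_minus_one_mult_self' mult_1 power2_eq_square power_int_minus_one_mult_self)

lemma phi_strip:
  assumes "\<xi> > 0" "real_of_int z / (2*real \<xi>) \<le> x" "x \<le> (real_of_int z + 1) / (2*real \<xi>)"
  shows "phi \<xi> x = (-1::real) powi (z + 1) * (4 * real \<xi> * x - 2 * real_of_int z - 1)"
proof -
  have xi: "real \<xi> > 0" using assms by simp
  have a: "real_of_int z \<le> 2 * real \<xi> * x" using assms(2) xi by (simp add: field_simps)
  have b: "2 * real \<xi> * x \<le> real_of_int z + 1" using assms(3) xi by (simp add: field_simps)
  show ?thesis
  proof (cases "2 * real \<xi> * x = real_of_int z + 1")
    case True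
    hence fl: "\<lfloor>2 * real \<xi> * x\<rfloor> = z + 1"
      by (metis floor_of_int of_int_1 of_int_add)
    have "(-1::real) powi (z + 1 + 1) = - ((-1::real) powi (z + 1))"
      by (simp add: power_int_add)
    moreover have "4 * real \<xi> * x = 2 * real_of_int z + 2" using True by linarith
    ultimately show ?thesis unfolding phi_def Let_def fl by simp
  next
    case False
    hence "\<lfloor>2 * real \<xi> * x\<rfloor> = z" using a b by (simp add: floor_eq_iff)
    then show ?thesis unfolding phi_def Let_def by simp
  qed
qed

lemma cross_det:
  fixes A :: "real^2^2"
  assumes "det A = 1"
  shows "(A *v d)$1 * (A *v vector [0,1])$2 - (A *v d)$2 * (A *v vector [0,1])$1 = d$1"
proof -
  have "(A *v d)$1 * (A *v vector [0,1])$2 - (A *v d)$2 * (A *v vector [0,1])$1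
     = d$1 * det A"
    unfolding mv1 mv2 det_2 by (simp add: algebra_simps)
  then show ?thesis using assms by simp
qed

lemma lagrange2:
  "((w::real^2) \<bullet> v)\<^sup>2 + (w$1 * v$2 - w$2 * v$1)\<^sup>2 = (norm w)\<^sup>2 * (norm v)\<^sup>2"
  unfolding norm2_sq inner2 by (simp add: power2_eq_square algebra_simps)

lemma dir_far:
  assumes "\<delta> > 0" "dir_dist w v > \<delta>" "dir_dist (-w) v > \<delta>" "w \<noteq> 0" "v \<noteq> 0"
  shows "(w \<bullet> v)\<^sup>2 < (cos (min \<delta> 1))\<^sup>2 * (norm w)\<^sup>2 * (norm v)\<^sup>2"
proof -
  define c where "c = (w \<bullet> v) / (norm w * norm v)"
  have np: "norm w * norm v > 0" using assms by simp
  have "\<bar>w \<bullet> v\<bar> \<le> norm w * norm v" by (rule Cauchy_Schwarz_ineq2)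
  moreover have "\<bar>c\<bar> = \<bar>w \<bullet> v\<bar> / (norm w * norm v)" unfolding c_def using np by (simp add: abs_divide)
  ultimately have cb: "\<bar>c\<bar> \<le> 1" using np by (simp add: pos_divide_le_eq)
  have d1: "arccos c > \<delta>" using assms(2) unfolding dir_dist_def c_def .
  have d2: "arccos (-c) > \<delta>" using assms(3) unfolding dir_dist_def c_def by simp
  have "arccos c \<le> pi" using cb by (intro arccos_ubound) auto
  hence dpi: "\<delta> < pi" using d1 by simp
  have "cos (arccos c) < cos \<delta>"
    using cb d1 \<open>arccos c \<le> pi\<close> assms(1) by (intro cos_monotone_0_pi) auto
  hence e1: "c < cos \<delta>" using cb by simp
  have "arccos (-c) \<le> pi" using cb by (intro arccos_ubound) auto
  have "cos (arccos (-c)) < cos \<delta>"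
    using cb d2 \<open>arccos (-c) \<le> pi\<close> assms(1) by (intro cos_monotone_0_pi) auto
  hence e2: "-c < cos \<delta>" using cb by simp
  have "cos \<delta> \<le> cos (min \<delta> 1)" using assms(1) dpi by (intro cos_monotone_0_pi_le) auto
  hence "\<bar>c\<bar> < cos (min \<delta> 1)" using e1 e2 by linarith
  hence "\<bar>c\<bar>\<^sup>2 < (cos (min \<delta> 1))\<^sup>2"
    by (intro power_strict_mono) auto
  hence "c\<^sup>2 < (cos (min \<delta> 1))\<^sup>2" by simp
  moreover have "(w \<bullet> v)\<^sup>2 = c\<^sup>2 * (norm w)\<^sup>2 * (norm v)\<^sup>2"
    unfolding c_def using np by (simp add: power_divide power_mult_distrib)
  moreover have "(norm w)\<^sup>2 * (norm v)\<^sup>2 > 0" using assms(4,5) by simp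
  ultimately show ?thesis by (simp add: mult.assoc mult_strict_right_mono)
qed

lemma dir_near:
  fixes u v :: "real^2"
  assumes "v \<noteq> 0" "\<mu> > 0" "\<delta>' > 0"
    "norm (u - \<mu> *\<^sub>R v) \<le> ((1 - cos (min \<delta>' 1)) / 2) * \<mu> * norm v"
  shows "dir_dist u v < \<delta>'"
proof -
  define d where "d = min \<delta>' 1"
  define \<theta> where "\<theta> = (1 - cos d) / 2"
  define e where "e = u - \<mu> *\<^sub>R v"
  have d0: "0 < d" "d \<le> 1" using assms unfolding d_def by auto
  have "pi/2 > 1" using pi_gt3 by simp
  have cpos: "cos d \<ge> 0" using d0 \<open>pi/2 > 1\<close> by (intro cos_ge_zero) auto
  have "cos d < cos 0" using d0 pi_gt3 by (intro cos_monotone_0_pi) auto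
  hence c1: "cos d < 1" by simp
  have th: "0 < \<theta>" "\<theta> \<le> 1/2" using cpos c1 unfolding \<theta>_def by auto
  have nv: "norm v > 0" using assms by simp
  have ne: "norm e \<le> \<theta> * \<mu> * norm v" using assms(4) unfolding e_def \<theta>_def d_def by simp
  have ueq: "u = \<mu> *\<^sub>R v + e" unfolding e_def by simp
  have "\<bar>e \<bullet> v\<bar> \<le> norm e * norm v" by (rule Cauchy_Schwarz_ineq2)
  hence "e \<bullet> v \<ge> - (\<theta> * \<mu> * norm v * norm v)"
  proof -
    have "norm e * norm v \<le> \<theta> * \<mu> * norm v * norm v" using ne nv by (simp add: mult_right_mono)
    thus ?thesis using \<open>\<bar>e \<bullet> v\<bar> \<le> norm e * norm v\<close> by linarith
  qed
  hence uv: "u \<bullet> v \<ge> \<mu> * (norm v)\<^sup>2 * (1 - \<theta>)"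
    unfolding ueq by (simp add: inner_add_left power2_norm_eq_inner[symmetric] algebra_simps power2_eq_square)
  have "norm u \<le> \<mu> * norm v + norm e" unfolding ueq
    using norm_triangle_ineq[of "\<mu> *\<^sub>R v" e] assms(2) by simp
  hence nu: "norm u \<le> \<mu> * norm v * (1 + \<theta>)" using ne by (simp add: algebra_simps)
  have mvp: "\<mu> * (norm v)\<^sup>2 > 0" using assms(2) nv by simp
  have "\<mu> * (norm v)\<^sup>2 * (1 - \<theta>) > 0" using mvp th by simp
  hence uvp: "u \<bullet> v > 0" using uv by linarith
  hence "u \<noteq> 0" by auto
  hence nup: "norm u * norm v > 0" using nv by simp
  have "cos d * (norm u * norm v) \<le> (1 - 2*\<theta>) * (\<mu> * (norm v)\<^sup>2 * (1 + \<theta>))"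
  proof -
    have "norm u * norm v \<le> \<mu> * (norm v)\<^sup>2 * (1 + \<theta>)"
    proof -
      have "norm u * norm v \<le> (\<mu> * norm v * (1 + \<theta>)) * norm v" using nu nv by (simp add: mult_right_mono)
      thus ?thesis by (simp add: power2_eq_square algebra_simps)
    qed
    moreover have "cos d = 1 - 2*\<theta>" unfolding \<theta>_def by (simp add: field_simps)
    ultimately show ?thesis using cpos by (simp add: mult_left_mono)
  qed
  also have "\<dots> < \<mu> * (norm v)\<^sup>2 * (1 - \<theta>)"
  proof -
    have "(1 - 2*\<theta>) * (1 + \<theta>) < 1 - \<theta>" using th by (simp add: algebra_simps power2_eq_square)
    hence "(\<mu> * (norm v)\<^sup>2) * ((1 - 2*\<theta>) * (1 + \<theta>)) < (\<mu> * (norm v)\<^sup>2) * (1 - \<theta>)"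
      using mvp by (intro mult_strict_left_mono) auto
    thus ?thesis by (simp add: algebra_simps)
  qed
  also have "\<dots> \<le> u \<bullet> v" by (rule uv)
  finally have "cos d < (u \<bullet> v) / (norm u * norm v)" using nup by (simp add: pos_less_divide_eq)
  moreover have "(u \<bullet> v) / (norm u * norm v) \<le> 1"
    using Cauchy_Schwarz_ineq2[of u v] nup by (simp add: pos_divide_le_eq)
  ultimately have "arccos ((u \<bullet> v) / (norm u * norm v)) < arccos (cos d)"
    using cpos by (intro arccos_less_arccos) auto
  also have "arccos (cos d) = d" using d0 pi_gt3 by (intro arccos_cos) auto
  finally show ?thesis unfolding dir_dist_def d_def by simp
qed

lemma norm_l1_2: "norm (x::real^2) \<le> \<bar>x$1\<bar> + \<bar>x$2\<bar>"
proof -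
  have "(norm x)\<^sup>2 \<le> (\<bar>x$1\<bar> + \<bar>x$2\<bar>)\<^sup>2"
    unfolding norm2_sq by (simp add: power2_eq_square algebra_simps)
  thus ?thesis by (rule power2_le_imp_le) simp
qed

lemma seg_comp:
  fixes P Q \<alpha> :: "real^'n"
  assumes "\<alpha> \<in> closed_segment P Q"
  shows "\<exists>s. 0 \<le> s \<and> s \<le> 1 \<and> (\<forall>i. \<alpha>$i = P$i + s * (Q$i - P$i))"
proof -
  obtain s where "0 \<le> s" "s \<le> 1" "\<alpha> = (1 - s) *\<^sub>R P + s *\<^sub>R Q"
    using assms by (auto simp: in_segment)
  moreover have "\<alpha>$i = P$i + s * (Q$i - P$i)" for i
  proof -
    have "\<alpha>$i = ((1 - s) *\<^sub>R P + s *\<^sub>R Q)$i" using \<open>\<alpha> = _\<close> by simp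
    thus ?thesis by (simp add: algebra_simps)
  qed
  ultimately have "0 \<le> s \<and> s \<le> 1 \<and> (\<forall>i. \<alpha>$i = P$i + s * (Q$i - P$i))" by blast
  thus ?thesis by blast
qed

lemma seg_diff:
  fixes P Q \<alpha> \<beta> :: "real^2"
  assumes "\<alpha> \<in> closed_segment P Q" "\<beta> \<in> closed_segment P Q" "(Q-P)$1 \<noteq> 0"
  shows "\<beta>$2 - \<alpha>$2 = (\<beta>$1 - \<alpha>$1) * ((Q-P)$2 / (Q-P)$1)"
proof -
  obtain s1 where s1: "\<forall>i. \<alpha>$i = P$i + s1 * (Q$i - P$i)" using seg_comp[OF assms(1)] by blast
  obtain s2 where s2: "\<forall>i. \<beta>$i = P$i + s2 * (Q$i - P$i)" using seg_comp[OF assms(2)] by blast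
  have "Q$1 - P$1 \<noteq> 0" using assms(3) by simp
  have e2: "\<beta>$2 - \<alpha>$2 = (s2 - s1) * (Q$2 - P$2)" using s1 s2 by (simp add: algebra_simps)
  have e1: "\<beta>$1 - \<alpha>$1 = (s2 - s1) * (Q$1 - P$1)" using s1 s2 by (simp add: algebra_simps)
  show ?thesis unfolding e1 e2 using \<open>Q$1 - P$1 \<noteq> 0\<close> by simp
qed

lemma slope_bound:
  fixes P Q \<alpha> \<beta> :: "real^2"
  assumes "\<alpha> \<in> closed_segment P Q" "\<beta> \<in> closed_segment P Q" "(Q-P)$1 \<noteq> 0"
    "\<bar>(Q-P)$2\<bar> \<le> K * \<bar>(Q-P)$1\<bar>"
  shows "\<bar>\<beta>$2 - \<alpha>$2\<bar> \<le> K * \<bar>\<beta>$1 - \<alpha>$1\<bar>"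
proof -
  have "\<bar>(Q-P)$2 / (Q-P)$1\<bar> \<le> K" using assms(3,4) by (simp add: abs_divide pos_divide_le_eq)
  hence "\<bar>\<beta>$1 - \<alpha>$1\<bar> * \<bar>(Q-P)$2 / (Q-P)$1\<bar> \<le> \<bar>\<beta>$1 - \<alpha>$1\<bar> * K"
    by (intro mult_left_mono) auto
  thus ?thesis unfolding seg_diff[OF assms(1-3)] abs_mult by (simp add: mult.commute)
qed

lemma J_affine:
  assumes "\<xi> > 0"
    "real_of_int z / (2*real \<xi>) \<le> \<alpha>$1" "\<alpha>$1 \<le> (real_of_int z + 1) / (2*real \<xi>)"
    "real_of_int z / (2*real \<xi>) \<le> \<beta>$1" "\<beta>$1 \<le> (real_of_int z + 1) / (2*real \<xi>)"
    "0 \<le> s" "s \<le> 1"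
  shows "J \<eta> \<xi> ((1 - s) *\<^sub>R \<alpha> + s *\<^sub>R \<beta>) = (1 - s) *\<^sub>R J \<eta> \<xi> \<alpha> + s *\<^sub>R J \<eta> \<xi> \<beta>"
proof -
  define x where "x = ((1 - s) *\<^sub>R \<alpha> + s *\<^sub>R \<beta>)$1"
  have x: "x = (1 - s) * \<alpha>$1 + s * \<beta>$1" unfolding x_def by simp
  define c1 where "c1 = real_of_int z / (2*real \<xi>)"
  define c2 where "c2 = (real_of_int z + 1) / (2*real \<xi>)"
  have "(1 - s) * c1 + s * c1 \<le> x"
    unfolding x using assms unfolding c1_def by (intro add_mono mult_left_mono) auto
  moreover have "(1 - s) * c1 + s * c1 = c1" by (simp add: algebra_simps)
  ultimately have x1: "real_of_int z / (2*real \<xi>) \<le> x" unfolding c1_def by linarith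
  have "x \<le> (1 - s) * c2 + s * c2"
    unfolding x using assms unfolding c2_def by (intro add_mono mult_left_mono) auto
  moreover have "(1 - s) * c2 + s * c2 = c2" by (simp add: algebra_simps)
  ultimately have x2: "x \<le> (real_of_int z + 1) / (2*real \<xi>)" unfolding c2_def by linarith
  note pa = phi_strip[OF assms(1-3)] and pb = phi_strip[OF assms(1,4,5)] and px = phi_strip[OF assms(1) x1 x2]
  have L: "(J \<eta> \<xi> ((1 - s) *\<^sub>R \<alpha> + s *\<^sub>R \<beta>))$2 = ((1 - s) *\<^sub>R \<alpha> + s *\<^sub>R \<beta>)$2 + \<eta> * phi \<xi> x"
    by (simp only: J2 x_def)
  define sg where "sg = (-1::real) powi (z+1)"
  define zz where "zz = real_of_int z"
  define xx where "xx = real \<xi>"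
  have key: "\<eta> * (sg * (4 * xx * ((1 - s) * \<alpha>$1 + s * \<beta>$1) - 2 * zz - 1)) =
     (1 - s) * (\<eta> * (sg * (4 * xx * \<alpha>$1 - 2 * zz - 1))) + s * (\<eta> * (sg * (4 * xx * \<beta>$1 - 2 * zz - 1)))"
    by (simp add: algebra_simps)
  have "(J \<eta> \<xi> ((1 - s) *\<^sub>R \<alpha> + s *\<^sub>R \<beta>))$2 = (1 - s) * \<alpha>$2 + s * \<beta>$2 + \<eta> * phi \<xi> x"
    using L by simp
  also have "\<dots> = (1 - s) * \<alpha>$2 + s * \<beta>$2 + \<eta> * (sg * (4 * xx * ((1 - s) * \<alpha>$1 + s * \<beta>$1) - 2 * zz - 1))"
    unfolding sg_def zz_def xx_def using px x by simp
  also have "\<dots> = (1 - s) * (\<alpha>$2 + \<eta> * phi \<xi> (\<alpha>$1)) + s * (\<beta>$2 + \<eta> * phi \<xi> (\<beta>$1))"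
    unfolding pa pb sg_def[symmetric] zz_def[symmetric] xx_def[symmetric] using key by (simp add: algebra_simps)
  also have "\<dots> = ((1 - s) *\<^sub>R J \<eta> \<xi> \<alpha> + s *\<^sub>R J \<eta> \<xi> \<beta>)$2" by (simp add: J2)
  finally show ?thesis unfolding vec2_eq by (simp add: J1)
qed

lemma piece:
  fixes P Q \<alpha> \<beta> :: "real^2"
  assumes "\<xi> > 0" "\<alpha> \<in> closed_segment P Q" "\<beta> \<in> closed_segment P Q" "(Q-P)$1 \<noteq> 0"
    "\<bar>(Q-P)$2\<bar> \<le> K * \<bar>(Q-P)$1\<bar>"
    "\<alpha>$1 = real_of_int z / (2*real \<xi>)" "\<beta>$1 = (real_of_int z + 1) / (2*real \<xi>)"
  shows "norm (J \<eta> \<xi> \<beta> - J \<eta> \<xi> \<alpha> - (2 * \<eta> * (-1) powi (z+1)) *\<^sub>R vector [0,1]) \<le> (1 + K) / (2 * real \<xi>)"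
proof -
  let ?y = "J \<eta> \<xi> \<beta> - J \<eta> \<xi> \<alpha> - (2 * \<eta> * (-1) powi (z+1)) *\<^sub>R vector [0,1]"
  have xi: "real \<xi> > 0" using assms by simp
  have d1: "\<beta>$1 - \<alpha>$1 = 1 / (2 * real \<xi>)" using assms(6,7) xi by (simp add: field_simps)
  have le1: "real_of_int z / (2*real \<xi>) \<le> (real_of_int z + 1) / (2*real \<xi>)"
    using xi by (intro divide_right_mono) auto
  have pa0: "phi \<xi> (\<alpha>$1) = (-1) powi (z+1) * (4 * real \<xi> * \<alpha>$1 - 2 * real_of_int z - 1)"
    using assms(6) le1 by (intro phi_strip[OF assms(1)]) auto
  have pb0: "phi \<xi> (\<beta>$1) = (-1) powi (z+1) * (4 * real \<xi> * \<beta>$1 - 2 * real_of_int z - 1)"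
    using assms(7) le1 by (intro phi_strip[OF assms(1)]) auto
  have ha: "4 * real \<xi> * \<alpha>$1 - 2 * real_of_int z - 1 = -1" using assms(6) xi by (simp add: field_simps)
  have pa: "phi \<xi> (\<alpha>$1) = (-1) powi (z+1) * (-1)" using pa0[unfolded ha] .
  have hb: "4 * real \<xi> * \<beta>$1 - 2 * real_of_int z - 1 = 1" using assms(7) xi by (simp add: field_simps)
  have pb: "phi \<xi> (\<beta>$1) = (-1) powi (z+1) * 1" using pb0[unfolded hb] .
  have y1: "?y$1 = 1 / (2 * real \<xi>)" using d1 by (simp add: J1)
  have y2: "?y$2 = \<beta>$2 - \<alpha>$2" by (simp add: J2 pa pb algebra_simps)
  have "\<bar>?y$2\<bar> \<le> K * (1 / (2 * real \<xi>))"
    unfolding y2 using slope_bound[OF assms(2-5)] d1 xi by simp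
  hence "\<bar>?y$1\<bar> + \<bar>?y$2\<bar> \<le> (1 + K) / (2 * real \<xi>)" unfolding y1 using xi
    by (simp add: field_simps)
  thus ?thesis using norm_l1_2[of ?y] by linarith
qed

lemma strip_exists:
  fixes X g m M :: real
  assumes "X > 0" "m \<le> g" "g \<le> M" "M - m \<ge> 4 / X"
  shows "\<exists>z::int. m \<le> real_of_int z / X \<and> (real_of_int z + 1) / X \<le> M \<and>
     g - 2 / X \<le> real_of_int z / X \<and> (real_of_int z + 1) / X \<le> g + 2 / X"
proof (cases "g + 2 / X \<le> M")
  case True
  define z where "z = \<lceil>X * g\<rceil>"
  have z1: "X * g \<le> real_of_int z" "real_of_int z < X * g + 1" unfolding z_def by linarith+
  have "g \<le> real_of_int z / X" using z1 assms(1) by (simp add: pos_le_divide_eq mult.commute)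
  moreover have "(real_of_int z + 1) / X \<le> g + 2 / X"
    using z1 assms(1) by (simp add: pos_divide_le_eq algebra_simps)
  moreover have "0 < 2 / X" using assms(1) by simp
  ultimately have "m \<le> real_of_int z / X \<and> (real_of_int z + 1) / X \<le> M \<and>
     g - 2 / X \<le> real_of_int z / X \<and> (real_of_int z + 1) / X \<le> g + 2 / X"
    using True assms by linarith
  thus ?thesis by blast
next
  case False
  define z where "z = \<lfloor>X * g\<rfloor> - 1"
  have z1: "real_of_int z \<le> X * g - 1" "X * g - 2 < real_of_int z" unfolding z_def by linarith+
  have "(real_of_int z + 1) / X \<le> g" using z1 assms(1) by (simp add: pos_divide_le_eq mult.commute)
  moreover have "g - 2 / X \<le> real_of_int z / X"
  proof -
    have "g - 2 / X = (X * g - 2) / X" using assms(1) by (simp add: field_simps)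
    also have "\<dots> \<le> real_of_int z / X" using z1(2) assms(1) by (intro divide_right_mono) auto
    finally show ?thesis .
  qed
  moreover have "m \<le> g - 2 / X" using False assms(4) by linarith
  moreover have "0 < 2 / X" using assms(1) by simp
  ultimately have "m \<le> real_of_int z / X \<and> (real_of_int z + 1) / X \<le> M \<and>
     g - 2 / X \<le> real_of_int z / X \<and> (real_of_int z + 1) / X \<le> g + 2 / X"
    using assms by linarith
  thus ?thesis by blast
qed

lemma line_pt:
  fixes P Q :: "real^2"
  assumes "(Q-P)$1 \<noteq> 0" "min (P$1) (Q$1) \<le> x" "x \<le> max (P$1) (Q$1)"
  shows "P + ((x - P$1) / (Q-P)$1) *\<^sub>R (Q - P) \<in> closed_segment P Q"
    "(P + ((x - P$1) / (Q-P)$1) *\<^sub>R (Q - P))$1 = x"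
proof -
  define u where "u = (x - P$1) / (Q-P)$1"
  have "0 \<le> u \<and> u \<le> 1"
  proof (cases "(Q-P)$1 > 0")
    case True
    hence "P$1 \<le> x" "x - P$1 \<le> (Q-P)$1" using assms by auto
    thus ?thesis unfolding u_def using True by (simp add: divide_le_eq_1)
  next
    case False
    hence F: "(Q-P)$1 < 0" using assms(1) by linarith
    hence "x \<le> P$1" "(Q-P)$1 \<le> x - P$1" using assms by auto
    thus ?thesis unfolding u_def using F by (simp add: divide_le_eq_1 zero_le_divide_iff)
  qed
  moreover have "P + u *\<^sub>R (Q - P) = (1 - u) *\<^sub>R P + u *\<^sub>R Q" by (simp add: algebra_simps)
  ultimately show "P + ((x - P$1) / (Q-P)$1) *\<^sub>R (Q - P) \<in> closed_segment P Q"
    unfolding u_def[symmetric] in_segment by blast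
  show "(P + ((x - P$1) / (Q-P)$1) *\<^sub>R (Q - P))$1 = x" using assms(1) by simp
qed

lemma density_core:
  fixes P Q G :: "real^2"
  assumes xi: "\<xi> > 0" and wd: "\<bar>(Q-P)$1\<bar> \<ge> 2 / real \<xi>" and sl: "\<bar>(Q-P)$2\<bar> \<le> K * \<bar>(Q-P)$1\<bar>"
    and G: "G \<in> closed_segment P Q" and t: "-1 \<le> \<tau>" "\<tau> \<le> 1" and K: "K \<ge> 0"
  shows "\<exists>z::int. \<exists>\<alpha> \<beta> Z. \<alpha> \<in> closed_segment P Q \<and> \<beta> \<in> closed_segment P Q \<and>
     \<alpha>$1 = real_of_int z / (2 * real \<xi>) \<and> \<beta>$1 = (real_of_int z + 1) / (2 * real \<xi>) \<and>
     Z \<in> closed_segment (J \<eta> \<xi> \<alpha>) (J \<eta> \<xi> \<beta>) \<and>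
     norm (Z - (G + (\<tau> * \<eta>) *\<^sub>R vector [0,1])) \<le> (1 + K) / real \<xi>"
proof -
  define d where "d = Q - P"
  define X where "X = 2 * real \<xi>"
  have X: "X > 0" unfolding X_def using xi by simp
  have "2 / real \<xi> > 0" using xi by simp
  hence d1: "d$1 \<noteq> 0" using wd unfolding d_def by auto
  define m where "m = min (P$1) (Q$1)"
  define M where "M = max (P$1) (Q$1)"
  have Mm: "M - m = \<bar>d$1\<bar>" unfolding M_def m_def d_def by auto
  obtain t0 where t0: "0 \<le> t0" "t0 \<le> 1" "\<forall>i. G$i = P$i + t0 * (Q$i - P$i)" using seg_comp[OF G] by blast
  have Gm: "m \<le> G$1" "G$1 \<le> M"
  proof -
    have "G$1 = (1 - t0) * P$1 + t0 * Q$1" using t0(3) by (simp add: algebra_simps)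
    moreover have "(1 - t0) * m + t0 * m \<le> (1 - t0) * P$1 + t0 * Q$1" unfolding m_def
      using t0 by (intro add_mono mult_left_mono) auto
    moreover have "(1 - t0) * P$1 + t0 * Q$1 \<le> (1 - t0) * M + t0 * M" unfolding M_def
      using t0 by (intro add_mono mult_left_mono) auto
    ultimately show "m \<le> G$1" "G$1 \<le> M" by (simp_all add: algebra_simps)
  qed
  have "4 / X = 2 / real \<xi>" unfolding X_def by simp
  hence "M - m \<ge> 4 / X" using Mm wd unfolding d_def by simp
  then obtain z :: int where z: "m \<le> real_of_int z / X" "(real_of_int z + 1) / X \<le> M"
     "G$1 - 2 / X \<le> real_of_int z / X" "(real_of_int z + 1) / X \<le> G$1 + 2 / X"
    using strip_exists[OF X Gm] by blast
  define L where "L x = P + ((x - P$1) / d$1) *\<^sub>R d" for x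
  have Lin: "L x \<in> closed_segment P Q" "(L x)$1 = x" if "m \<le> x" "x \<le> M" for x
  proof -
    have d1': "(Q-P)$1 \<noteq> 0" using d1 unfolding d_def .
    have mm: "min (P$1) (Q$1) \<le> x" "x \<le> max (P$1) (Q$1)" using that unfolding m_def M_def by auto
    show "L x \<in> closed_segment P Q" unfolding L_def d_def by (rule line_pt(1)[OF d1' mm])
    show "(L x)$1 = x" unfolding L_def d_def by (rule line_pt(2)[OF d1' mm])
  qed
  define a where "a = real_of_int z / X"
  define b where "b = (real_of_int z + 1) / X"
  have ab: "b - a = 1 / X" unfolding a_def b_def by (simp add: add_divide_distrib diff_divide_distrib)
  have "1 / X > 0" using X by simp
  hence "a \<le> b" using ab by linarith
  define sg where "sg = (-1::real) powi (z+1)"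
  have sg2: "sg * sg = 1" using sgn_sq[of "z+1"] unfolding sg_def by (simp add: power2_eq_square)
  have "\<bar>sg\<bar> = 1" unfolding sg_def by (simp add: power_int_abs)
  hence "\<bar>\<tau> * sg\<bar> \<le> 1" using t by (simp add: abs_mult)
  hence tsg: "-1 \<le> \<tau> * sg" "\<tau> * sg \<le> 1" by linarith+
  define s where "s = (1 + \<tau> * sg) / 2"
  have s01: "0 \<le> s" "s \<le> 1" unfolding s_def using tsg by auto
  define xs where "xs = a + s * (b - a)"
  have "s * (b - a) \<le> 1 * (b - a)" using s01 \<open>a \<le> b\<close> by (intro mult_right_mono) auto
  moreover have "0 \<le> s * (b - a)" using s01 \<open>a \<le> b\<close> by simp
  ultimately have xsab: "a \<le> xs" "xs \<le> b" unfolding xs_def by auto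
  have ma: "m \<le> a" "b \<le> M" using z unfolding a_def b_def by auto
  define \<alpha> where "\<alpha> = L a"
  define \<beta> where "\<beta> = L b"
  have \<alpha>: "\<alpha> \<in> closed_segment P Q" "\<alpha>$1 = a" unfolding \<alpha>_def using Lin ma \<open>a \<le> b\<close> by auto
  have \<beta>: "\<beta> \<in> closed_segment P Q" "\<beta>$1 = b" unfolding \<beta>_def using Lin ma \<open>a \<le> b\<close> by auto
  have Lxs: "L xs \<in> closed_segment P Q" "(L xs)$1 = xs" using Lin ma xsab by auto
  have Lcomb: "L xs = (1 - s) *\<^sub>R \<alpha> + s *\<^sub>R \<beta>"
  proof -
    define ca where "ca = (a - P$1) / d$1"
    define cb where "cb = (b - P$1) / d$1"
    have c: "(xs - P$1) / d$1 = (1 - s) * ca + s * cb"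
      using d1 unfolding xs_def ca_def cb_def by (simp add: field_simps)
    have "(1 - s) *\<^sub>R (P + ca *\<^sub>R d) + s *\<^sub>R (P + cb *\<^sub>R d) = P + ((1 - s) * ca + s * cb) *\<^sub>R d"
      by (simp add: algebra_simps)
    thus ?thesis unfolding \<alpha>_def \<beta>_def L_def c ca_def[symmetric] cb_def[symmetric] by simp
  qed
  have aX: "a = real_of_int z / (2 * real \<xi>)" "b = (real_of_int z + 1) / (2 * real \<xi>)"
    unfolding a_def b_def X_def by auto
  define Z where "Z = J \<eta> \<xi> (L xs)"
  have Zaff: "Z = (1 - s) *\<^sub>R J \<eta> \<xi> \<alpha> + s *\<^sub>R J \<eta> \<xi> \<beta>"
    unfolding Z_def Lcomb using \<alpha> \<beta> aX \<open>a \<le> b\<close> s01 by (intro J_affine[OF xi]) auto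
  hence Zin: "Z \<in> closed_segment (J \<eta> \<xi> \<alpha>) (J \<eta> \<xi> \<beta>)" using s01 unfolding in_segment by blast
  have phx: "phi \<xi> xs = \<tau>"
  proof -
    have "phi \<xi> xs = sg * (4 * real \<xi> * xs - 2 * real_of_int z - 1)"
      unfolding sg_def using xsab aX by (intro phi_strip[OF xi]) auto
    also have "4 * real \<xi> * xs - 2 * real_of_int z - 1 = \<tau> * sg"
      unfolding xs_def ab s_def a_def b_def X_def using xi by (simp add: field_simps)
    also have "sg * (\<tau> * sg) = \<tau>" using sg2 by (simp add: algebra_simps)
    finally show ?thesis .
  qed
  define E where "E = Z - (G + (\<tau> * \<eta>) *\<^sub>R vector [0,1])"
  have E1: "E$1 = xs - G$1" unfolding E_def Z_def using Lxs by (simp add: J1)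
  have E2: "E$2 = (L xs)$2 - G$2" unfolding E_def Z_def using Lxs phx by (simp add: J2)
  have "\<bar>(L xs)$2 - G$2\<bar> \<le> K * \<bar>(L xs)$1 - G$1\<bar>"
    using slope_bound[OF G Lxs(1)] d1 sl unfolding d_def by simp
  hence E2b: "\<bar>E$2\<bar> \<le> K * \<bar>xs - G$1\<bar>" unfolding E2 using Lxs by simp
  have "\<bar>xs - G$1\<bar> \<le> 2 / X" using xsab z unfolding a_def b_def by auto
  hence xg: "\<bar>xs - G$1\<bar> \<le> 1 / real \<xi>" unfolding X_def by simp
  have "norm E \<le> \<bar>E$1\<bar> + \<bar>E$2\<bar>" by (rule norm_l1_2)
  also have "\<dots> \<le> \<bar>xs - G$1\<bar> + K * \<bar>xs - G$1\<bar>" using E1 E2b by simp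
  also have "\<dots> = (1 + K) * \<bar>xs - G$1\<bar>" by (simp add: algebra_simps)
  also have "\<dots> \<le> (1 + K) * (1 / real \<xi>)" using xg K by (intro mult_left_mono) auto
  finally have "norm E \<le> (1 + K) / real \<xi>" by simp
  thus ?thesis using \<alpha> \<beta> aX Zin unfolding E_def by blast
qed

lemma v_nonzero:
  fixes A :: "real^2^2"
  assumes "det A = 1"
  shows "A *v vector [0,1] \<noteq> 0"
proof
  assume "A *v vector [0,1] = 0"
  hence "A$1$2 = 0" "A$2$2 = 0" using mv1[of A "vector [0,1]"] mv2[of A "vector [0,1]"]
    by (simp_all add: vec_eq_iff)
  thus False using assms by (simp add: det_2)
qed

lemma seg_consts:
  fixes A B :: "real^2^2" and w :: "real^2"
  assumes detA: "det A = 1" and AB: "\<And>x. A *v (B *v x) = x" and dp: "\<delta> > 0"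
    and dw: "dir_dist w (A *v vector [0,1]) > \<delta>" "dir_dist (-w) (A *v vector [0,1]) > \<delta>"
    and nw: "norm w > l" and l: "l > 0"
  shows "\<bar>(B *v w)$1\<bar> > l * norm (A *v vector [0,1]) * sin (min \<delta> 1)"
    "\<bar>(B *v w)$2\<bar> \<le> (onorm ((*v) B) / (norm (A *v vector [0,1]) * sin (min \<delta> 1))) * \<bar>(B *v w)$1\<bar>"
proof -
  define v where "v = A *v vector [0,1]"
  define d where "d = B *v w"
  define s where "s = sin (min \<delta> 1)"
  define ob where "ob = onorm ((*v) B)"
  have v0: "v \<noteq> 0" unfolding v_def by (rule v_nonzero[OF detA])
  have w0: "w \<noteq> 0" using nw l by auto
  have wd: "w = A *v d" unfolding d_def using AB by simp
  have cr: "w$1 * v$2 - w$2 * v$1 = d$1" unfolding wd v_def by (rule cross_det[OF detA])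
  have lag: "(w \<bullet> v)\<^sup>2 + (d$1)\<^sup>2 = (norm w)\<^sup>2 * (norm v)\<^sup>2" using lagrange2[of w v] cr by simp
  have far: "(w \<bullet> v)\<^sup>2 < (cos (min \<delta> 1))\<^sup>2 * (norm w)\<^sup>2 * (norm v)\<^sup>2"
    using dir_far[OF dp _ _ w0 v0] dw unfolding v_def by simp
  have "(d$1)\<^sup>2 > (norm w)\<^sup>2 * (norm v)\<^sup>2 * (1 - (cos (min \<delta> 1))\<^sup>2)"
    using lag far by (simp add: algebra_simps)
  also have "1 - (cos (min \<delta> 1))\<^sup>2 = s\<^sup>2" unfolding s_def using sin_squared_eq[of "min \<delta> 1"] by simp
  finally have "\<bar>d$1\<bar>\<^sup>2 > (norm w * norm v * s)\<^sup>2" by (simp add: power_mult_distrib)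
  moreover have spos: "s > 0" unfolding s_def using dp pi_gt3 by (intro sin_gt_zero) auto
  ultimately have d1b: "\<bar>d$1\<bar> > norm w * norm v * s"
    using power2_less_imp_less by (metis abs_ge_zero)
  have nvp: "norm v > 0" using v0 by simp
  have "l * norm v * s < norm w * norm v * s" using nw nvp spos by simp
  thus "\<bar>(B *v w)$1\<bar> > l * norm (A *v vector [0,1]) * sin (min \<delta> 1)"
    using d1b unfolding d_def v_def s_def by linarith
  have obp: "ob \<ge> 0" unfolding ob_def by (rule onorm_pos_le[OF matrix_vector_mul_bounded_linear])
  have "\<bar>d$2\<bar> \<le> norm d" by (rule component_le_norm_cart)
  also have "\<dots> \<le> ob * norm w" unfolding d_def ob_def by (rule onorm[OF matrix_vector_mul_bounded_linear])
  also have "\<dots> \<le> ob * (\<bar>d$1\<bar> / (norm v * s))"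
  proof -
    have "norm w \<le> \<bar>d$1\<bar> / (norm v * s)" using d1b nvp spos by (simp add: pos_le_divide_eq)
    thus ?thesis using obp by (rule mult_left_mono)
  qed
  also have "\<dots> = (ob / (norm v * s)) * \<bar>d$1\<bar>" by simp
  finally show "\<bar>(B *v w)$2\<bar> \<le> (onorm ((*v) B) / (norm (A *v vector [0,1]) * sin (min \<delta> 1))) * \<bar>(B *v w)$1\<bar>"
    unfolding d_def ob_def v_def s_def .
qed

lemma mv_seg:
  fixes M :: "real^2^2"
  assumes "x \<in> closed_segment a b"
  shows "M *v x \<in> closed_segment (M *v a) (M *v b)"
  using assms closed_segment_linear_image[OF matrix_vector_mul_linear[of M], of a b] by blast

lemma powi_abs1: "\<bar>(-1::real) powi k\<bar> = 1"
  by (simp add: power_int_abs)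

theorem mainTheorem12:
  fixes r \<epsilon>' l \<delta> \<delta>' :: real and A :: "real^2^2"
  assumes "r > 0" "\<epsilon>' > 0" "l > 0" "\<delta> > 0" "\<delta>' > 0" "SL2Z A"
  defines "v \<equiv> A *v vector [0, 1]"
  shows "\<exists>\<xi>0::nat. \<xi>0 \<ge> 1 \<and>
    (\<forall>\<eta> X \<epsilon> S. \<bar>\<eta>\<bar> = r \<and> X \<noteq> {} \<and> \<epsilon> > 0 \<and>
       eps_dense \<epsilon> (segs_union S) X \<and>
       (\<forall>(p,q)\<in>S. dir_dist (q - p) v > \<delta> \<and> dir_dist (p - q) v > \<delta> \<and> dist p q > l) \<longrightarrow>
       (\<forall>\<xi>::nat. \<xi> \<ge> \<xi>0 \<longrightarrow>
          (\<exists>S'. segs_union S' \<subseteq>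
                   (\<lambda>p. A *v J \<eta> \<xi> (matrix_inv A *v p)) ` segs_union S \<and>
                 eps_dense (\<epsilon> + \<epsilon>') (segs_union S') (Str X (\<eta> *\<^sub>R v)) \<and>
                 (\<forall>(p,q)\<in>S'. (dir_dist (q - p) v < \<delta>' \<or> dir_dist (p - q) v < \<delta>') \<and>
                    dist p q > inverse (onorm (\<lambda>x. matrix_inv A *v x)) * \<bar>\<eta>\<bar>))))"
proof -
  note rp = assms(1) and ep = assms(2) and lp = assms(3) and dp = assms(4) and dp' = assms(5)
  have detA: "det A = 1" using assms(6) unfolding SL2Z_def by simp
  have "invertible A" using detA by (simp add: invertible_det_nz)
  define B where "B = matrix_inv A"
  have "\<exists>A'. A ** A' = mat 1 \<and> A' ** A = mat 1" using \<open>invertible A\<close> unfolding invertible_def .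
  hence ABm: "A ** B = mat 1 \<and> B ** A = mat 1" unfolding B_def matrix_inv_def by (rule someI_ex)
  have AB: "A *v (B *v x) = x" for x using ABm by (simp add: matrix_vector_mul_assoc)
  have BA: "B *v (A *v x) = x" for x using ABm by (simp add: matrix_vector_mul_assoc)
  define s1 where "s1 = sin (min \<delta> 1)"
  define nv where "nv = norm v"
  define oa where "oa = onorm ((*v) A)"
  define ob where "ob = onorm ((*v) B)"
  define K where "K = ob / (nv * s1)"
  define c0 where "c0 = l * nv * s1"
  define th where "th = (1 - cos (min \<delta>' 1)) / 2"
  have s1p: "s1 > 0" unfolding s1_def using dp pi_gt3 by (intro sin_gt_zero) auto
  have v0: "v \<noteq> 0" unfolding v_def by (rule v_nonzero[OF detA])
  have nvp: "nv > 0" unfolding nv_def using v0 by simp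
  have oap: "oa \<ge> 0" unfolding oa_def by (rule onorm_pos_le[OF matrix_vector_mul_bounded_linear])
  have obp: "ob \<ge> 0" unfolding ob_def by (rule onorm_pos_le[OF matrix_vector_mul_bounded_linear])
  have Kp: "K \<ge> 0" unfolding K_def using obp nvp s1p by simp
  have c0p: "c0 > 0" unfolding c0_def using lp nvp s1p by simp
  have thp: "th > 0"
  proof -
    have "cos (min \<delta>' 1) < cos 0" using dp' pi_gt3 by (intro cos_monotone_0_pi) auto
    thus ?thesis unfolding th_def by simp
  qed
  define C where "C = 2 / c0 + (1 + K) / r + oa * (1 + K) / (th * r * nv) + oa * (1 + K) / \<epsilon>' + 1"
  have t1: "2 / c0 \<ge> 0" using c0p by simp
  have t2: "(1 + K) / r \<ge> 0" using Kp rp by simp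
  have t3: "oa * (1 + K) / (th * r * nv) \<ge> 0" using oap Kp thp rp nvp by simp
  have t4: "oa * (1 + K) / \<epsilon>' \<ge> 0" using oap Kp ep by simp
  have C1: "C \<ge> 1" unfolding C_def using t1 t2 t3 t4 by linarith
  show ?thesis
  proof (intro exI[of _ "nat \<lceil>C\<rceil>"] conjI allI impI)
    show "1 \<le> nat \<lceil>C\<rceil>" using C1 by linarith
    fix \<eta> X \<epsilon> S \<xi>
    assume H: "\<bar>\<eta>\<bar> = r \<and> X \<noteq> {} \<and> \<epsilon> > 0 \<and> eps_dense \<epsilon> (segs_union S) X \<and>
       (\<forall>(p,q)\<in>S. dir_dist (q - p) v > \<delta> \<and> dir_dist (p - q) v > \<delta> \<and> dist p q > l)"
    assume xi0: "nat \<lceil>C\<rceil> \<le> \<xi>"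
    have xC: "real \<xi> \<ge> C" using xi0 by linarith
    have xp: "real \<xi> > 0" using xC C1 by linarith
    have xip: "\<xi> > 0" using xp by simp
    have R1: "2 / real \<xi> \<le> c0"
    proof -
      have "2 / c0 \<le> real \<xi>" using xC t2 t3 t4 unfolding C_def by linarith
      thus ?thesis using c0p xp by (simp add: field_simps)
    qed
    have R2: "(1 + K) / (2 * real \<xi>) < r"
    proof -
      have "(1 + K) / r < real \<xi>" using xC t1 t3 t4 unfolding C_def by linarith
      hence "1 + K < r * real \<xi>" using rp by (simp add: field_simps)
      moreover have "r * real \<xi> \<le> r * (2 * real \<xi>)" using rp xp by simp
      ultimately have "1 + K < r * (2 * real \<xi>)" by linarith
      thus ?thesis using rp xp by (simp add: pos_divide_less_eq mult.commute)
    qed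
    have R3: "oa * ((1 + K) / (2 * real \<xi>)) \<le> th * (2 * r) * nv"
    proof -
      have "oa * (1 + K) / (th * r * nv) \<le> real \<xi>" using xC t1 t2 t4 unfolding C_def by linarith
      hence "oa * (1 + K) \<le> real \<xi> * (th * r * nv)" using thp rp nvp by (simp add: pos_divide_le_eq)
      moreover have "real \<xi> * (th * r * nv) \<le> real \<xi> * (th * r * nv) * 4" using xp thp rp nvp by simp
      ultimately have "oa * (1 + K) \<le> th * (2 * r) * nv * (2 * real \<xi>)" by (simp add: algebra_simps)
      thus ?thesis using xp by (simp add: pos_divide_le_eq)
    qed
    have R4: "oa * ((1 + K) / real \<xi>) \<le> \<epsilon>'"
    proof -
      have "oa * (1 + K) / \<epsilon>' \<le> real \<xi>" using xC t1 t2 t3 unfolding C_def by linarith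
      hence "oa * (1 + K) \<le> real \<xi> * \<epsilon>'" using ep by (simp add: pos_divide_le_eq)
      thus ?thesis using xp by (simp add: pos_divide_le_eq mult.commute)
    qed

    define T where "T = (\<lambda>p. A *v J \<eta> \<xi> (B *v p))"
    define S' where "S' = {(T a, T b) | a b. \<exists>p q z. (p,q) \<in> S \<and> a \<in> closed_segment p q \<and>
       b \<in> closed_segment p q \<and> (B *v a)$1 = real_of_int z / (2 * real \<xi>) \<and>
       (B *v b)$1 = (real_of_int z + 1) / (2 * real \<xi>)}"
    have le1: "real_of_int z / (2*real \<xi>) \<le> (real_of_int z + 1) / (2*real \<xi>)" for z
      using xp by (intro divide_right_mono) auto
    have segS: "(B *v q - B *v p)$1 \<noteq> 0 \<and> \<bar>(B *v q - B *v p)$1\<bar> \<ge> 2 / real \<xi> \<and>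
       \<bar>(B *v q - B *v p)$2\<bar> \<le> K * \<bar>(B *v q - B *v p)$1\<bar>" if "(p,q) \<in> S" for p q
    proof -
      have h: "dir_dist (q - p) v > \<delta>" "dir_dist (p - q) v > \<delta>" "dist p q > l" using H that by auto
      have h1: "dir_dist (q-p) (A *v vector [0,1]) > \<delta>" using h(1) unfolding v_def .
      have h2: "dir_dist (-(q-p)) (A *v vector [0,1]) > \<delta>" using h(2) unfolding v_def by simp
      have h3: "norm (q - p) > l" using h(3) by (simp add: dist_norm norm_minus_commute)
      note sc = seg_consts[OF detA AB dp h1 h2 h3 lp]
      have sc1: "\<bar>(B *v (q-p))$1\<bar> > c0" using sc(1) unfolding c0_def nv_def s1_def v_def .
      have sc2: "\<bar>(B *v (q-p))$2\<bar> \<le> K * \<bar>(B *v (q-p))$1\<bar>"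
        using sc(2) unfolding K_def nv_def s1_def ob_def v_def .
      show ?thesis using sc1 sc2 R1 c0p by (auto simp: matrix_vector_mult_diff_distrib)
    qed
    have pp: "(dir_dist (q' - p') v < \<delta>' \<or> dir_dist (p' - q') v < \<delta>') \<and> dist p' q' > inverse ob * \<bar>\<eta>\<bar>"
      if inS: "(p', q') \<in> S'" for p' q'
    proof -
      obtain a b p q z where eq: "p' = T a" "q' = T b" and pq: "(p,q) \<in> S"
        and ab: "a \<in> closed_segment p q" "b \<in> closed_segment p q"
        and z: "(B *v a)$1 = real_of_int z / (2 * real \<xi>)" "(B *v b)$1 = (real_of_int z + 1) / (2 * real \<xi>)"
        using inS unfolding S'_def by blast
      define \<alpha> where "\<alpha> = B *v a"
      define \<beta> where "\<beta> = B *v b"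
      have \<alpha>in: "\<alpha> \<in> closed_segment (B *v p) (B *v q)" unfolding \<alpha>_def by (rule mv_seg[OF ab(1)])
      have \<beta>in: "\<beta> \<in> closed_segment (B *v p) (B *v q)" unfolding \<beta>_def by (rule mv_seg[OF ab(2)])
      note sp = segS[OF pq]
      define \<mu> where "\<mu> = 2 * \<eta> * (-1) powi (z+1)"
      define e where "e = J \<eta> \<xi> \<beta> - J \<eta> \<xi> \<alpha> - \<mu> *\<^sub>R vector [0,1]"
      have ne: "norm e \<le> (1 + K) / (2 * real \<xi>)"
        unfolding e_def \<mu>_def using piece[OF xip \<alpha>in \<beta>in, of K z \<eta>] sp z unfolding \<alpha>_def \<beta>_def by auto
      have mu: "\<bar>\<mu>\<bar> = 2 * r" unfolding \<mu>_def using H by (simp add: abs_mult powi_abs1)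
      define \<Delta> where "\<Delta> = J \<eta> \<xi> \<beta> - J \<eta> \<xi> \<alpha>"
      have qpD: "q' - p' = A *v \<Delta>"
        unfolding eq T_def \<Delta>_def \<alpha>_def \<beta>_def by (simp add: matrix_vector_mult_diff_distrib)
      have diff: "q' - p' = \<mu> *\<^sub>R v + A *v e"
        unfolding qpD e_def \<Delta>_def v_def by (simp add: matrix_vector_mult_diff_distrib matrix_vector_mult_scaleR)
      have "norm (A *v e) \<le> oa * norm e" unfolding oa_def by (rule onorm[OF matrix_vector_mul_bounded_linear])
      also have "\<dots> \<le> oa * ((1 + K) / (2 * real \<xi>))" using ne oap by (rule mult_left_mono)
      also have "\<dots> \<le> th * (2 * r) * nv" by (rule R3)
      finally have nAe: "norm (A *v e) \<le> th * \<bar>\<mu>\<bar> * nv" using mu by simp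
      have dir: "dir_dist (q' - p') v < \<delta>' \<or> dir_dist (p' - q') v < \<delta>'"
      proof (cases "\<mu> > 0")
        case True
        have "norm ((q' - p') - \<mu> *\<^sub>R v) \<le> ((1 - cos (min \<delta>' 1)) / 2) * \<mu> * norm v"
          using nAe True diff unfolding th_def nv_def by simp
        thus ?thesis using dir_near[OF v0 True dp'] by blast
      next
        case False
        have "\<mu> \<noteq> 0" using mu rp by auto
        hence mneg: "-\<mu> > 0" using False by simp
        have "(p' - q') - (-\<mu>) *\<^sub>R v = - (A *v e)" using diff by (simp add: algebra_simps)
        hence "norm ((p' - q') - (-\<mu>) *\<^sub>R v) \<le> ((1 - cos (min \<delta>' 1)) / 2) * (-\<mu>) * norm v"
          using nAe False unfolding th_def nv_def by simp
        thus ?thesis using dir_near[OF v0 mneg dp'] by blast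
      qed
      have "\<Delta>$2 = \<mu> + e$2" unfolding e_def \<Delta>_def by simp
      moreover have "\<bar>e$2\<bar> \<le> norm e" by (rule component_le_norm_cart)
      ultimately have "\<bar>\<Delta>$2\<bar> \<ge> 2 * r - (1 + K) / (2 * real \<xi>)" using mu ne by linarith
      hence "\<bar>\<Delta>$2\<bar> > r" using R2 by linarith
      moreover have "\<bar>\<Delta>$2\<bar> \<le> norm \<Delta>" by (rule component_le_norm_cart)
      moreover have "norm \<Delta> \<le> ob * norm (A *v \<Delta>)"
        using onorm[OF matrix_vector_mul_bounded_linear, of B "A *v \<Delta>"] BA unfolding ob_def by simp
      moreover have "dist p' q' = norm (A *v \<Delta>)" unfolding qpD[symmetric] by (metis dist_commute dist_norm)
      ultimately have obd: "ob * dist p' q' > r" by simp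
      have "ob > 0"
      proof (rule ccontr)
        assume "\<not> ob > 0"
        hence "ob = 0" using obp by simp
        thus False using obd rp by simp
      qed
      hence "dist p' q' > r / ob" using obd by (simp add: pos_divide_less_eq mult.commute)
      hence "dist p' q' > inverse ob * \<bar>\<eta>\<bar>" using H by (simp add: divide_inverse mult.commute)
      thus ?thesis using dir by blast
    qed
    have sub: "segs_union S' \<subseteq> T ` segs_union S"
    proof
      fix y assume "y \<in> segs_union S'"
      then obtain p' q' where pq': "(p',q') \<in> S'" "y \<in> closed_segment p' q'" unfolding segs_union_def by auto
      obtain a b p q z where eq: "p' = T a" "q' = T b" and pq: "(p,q) \<in> S"
        and ab: "a \<in> closed_segment p q" "b \<in> closed_segment p q"
        and z: "(B *v a)$1 = real_of_int z / (2 * real \<xi>)" "(B *v b)$1 = (real_of_int z + 1) / (2 * real \<xi>)"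
        using pq'(1) unfolding S'_def by blast
      obtain u where u: "0 \<le> u" "u \<le> 1" "y = (1 - u) *\<^sub>R T a + u *\<^sub>R T b"
        using pq'(2) eq unfolding in_segment by blast
      define c where "c = (1 - u) *\<^sub>R a + u *\<^sub>R b"
      have "c \<in> closed_segment a b" unfolding c_def in_segment using u by blast
      moreover have "closed_segment a b \<subseteq> closed_segment p q" using ab by (simp add: subset_closed_segment)
      ultimately have cin: "c \<in> closed_segment p q" by blast
      have Bc: "B *v c = (1 - u) *\<^sub>R (B *v a) + u *\<^sub>R (B *v b)"
        unfolding c_def by (simp add: matrix_vector_right_distrib matrix_vector_mult_scaleR)
      have "J \<eta> \<xi> (B *v c) = (1 - u) *\<^sub>R J \<eta> \<xi> (B *v a) + u *\<^sub>R J \<eta> \<xi> (B *v b)"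
        unfolding Bc using z le1[of z] u by (intro J_affine[OF xip]) auto
      hence "T c = y" unfolding T_def u(3) by (simp add: matrix_vector_right_distrib matrix_vector_mult_scaleR)
      moreover have "c \<in> segs_union S" unfolding segs_union_def using pq cin by blast
      ultimately show "y \<in> T ` segs_union S" by blast
    qed
    have dens: "eps_dense (\<epsilon> + \<epsilon>') (segs_union S') (Str X (\<eta> *\<^sub>R v))"
      unfolding eps_dense_def
    proof
      fix y assume "y \<in> Str X (\<eta> *\<^sub>R v)"
      then obtain x t where y: "y = x + t" "x \<in> X" "t \<in> closed_segment (-(\<eta> *\<^sub>R v)) (\<eta> *\<^sub>R v)"
        unfolding Str_def by auto
      obtain u where u: "0 \<le> u" "u \<le> 1" "t = (1 - u) *\<^sub>R (-(\<eta> *\<^sub>R v)) + u *\<^sub>R (\<eta> *\<^sub>R v)"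
        using y(3) unfolding in_segment by blast
      define \<tau> where "\<tau> = 2 * u - 1"
      have tt: "t = (\<tau> * \<eta>) *\<^sub>R v" unfolding u(3) \<tau>_def vec2_eq by (simp add: algebra_simps)
      have \<tau>b: "-1 \<le> \<tau>" "\<tau> \<le> 1" using u unfolding \<tau>_def by auto
      have "eps_dense \<epsilon> (segs_union S) X" using H by blast
      then obtain g where g: "g \<in> segs_union S" "dist g x < \<epsilon>" using y(2) unfolding eps_dense_def by blast
      then obtain p q where pq: "(p,q) \<in> S" "g \<in> closed_segment p q" unfolding segs_union_def by auto
      note sp = segS[OF pq(1)]
      have G: "B *v g \<in> closed_segment (B *v p) (B *v q)" by (rule mv_seg[OF pq(2)])
      obtain z \<alpha> \<beta> Z where c: "\<alpha> \<in> closed_segment (B *v p) (B *v q)" "\<beta> \<in> closed_segment (B *v p) (B *v q)"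
        "\<alpha>$1 = real_of_int z / (2 * real \<xi>)" "\<beta>$1 = (real_of_int z + 1) / (2 * real \<xi>)"
        "Z \<in> closed_segment (J \<eta> \<xi> \<alpha>) (J \<eta> \<xi> \<beta>)"
        "norm (Z - (B *v g + (\<tau> * \<eta>) *\<^sub>R vector [0,1])) \<le> (1 + K) / real \<xi>"
        using density_core[OF xip _ _ G \<tau>b Kp, of \<eta>] sp by blast
      define a where "a = A *v \<alpha>"
      define b where "b = A *v \<beta>"
      have ain: "a \<in> closed_segment p q" using mv_seg[OF c(1), of A] unfolding a_def AB .
      have bin: "b \<in> closed_segment p q" using mv_seg[OF c(2), of A] unfolding b_def AB .
      have Ba: "B *v a = \<alpha>" "B *v b = \<beta>" unfolding a_def b_def BA by simp_all
      have inS': "(T a, T b) \<in> S'" unfolding S'_def using pq(1) ain bin c(3,4) Ba by blast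
      have TaTb: "T a = A *v J \<eta> \<xi> \<alpha>" "T b = A *v J \<eta> \<xi> \<beta>" unfolding T_def Ba by simp_all
      have AZ: "A *v Z \<in> closed_segment (T a) (T b)" unfolding TaTb by (rule mv_seg[OF c(5)])
      hence AZS: "A *v Z \<in> segs_union S'" unfolding segs_union_def using inS' by blast
      have eqA: "A *v Z - (g + (\<tau> * \<eta>) *\<^sub>R v) = A *v (Z - (B *v g + (\<tau> * \<eta>) *\<^sub>R vector [0,1]))"
        unfolding v_def by (simp add: matrix_vector_mult_diff_distrib matrix_vector_right_distrib matrix_vector_mult_scaleR AB)
      have "norm (A *v (Z - (B *v g + (\<tau> * \<eta>) *\<^sub>R vector [0,1]))) \<le> oa * norm (Z - (B *v g + (\<tau> * \<eta>) *\<^sub>R vector [0,1]))"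
        unfolding oa_def by (rule onorm[OF matrix_vector_mul_bounded_linear])
      also have "\<dots> \<le> oa * ((1 + K) / real \<xi>)" using c(6) oap by (rule mult_left_mono)
      also have "\<dots> \<le> \<epsilon>'" by (rule R4)
      finally have d1: "dist (A *v Z) (g + (\<tau> * \<eta>) *\<^sub>R v) \<le> \<epsilon>'" unfolding dist_norm eqA .
      have d2: "dist (g + (\<tau> * \<eta>) *\<^sub>R v) y = dist g x" unfolding y(1) tt dist_norm by (simp add: algebra_simps)
      have "dist (A *v Z) y \<le> dist (A *v Z) (g + (\<tau> * \<eta>) *\<^sub>R v) + dist (g + (\<tau> * \<eta>) *\<^sub>R v) y"
        by (rule dist_triangle)
      hence "dist (A *v Z) y < \<epsilon> + \<epsilon>'" using d1 d2 g(2) by linarith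
      thus "\<exists>x\<in>segs_union S'. dist x y < \<epsilon> + \<epsilon>'" using AZS by blast
    qed
    have pp': "\<forall>(p,q)\<in>S'. (dir_dist (q - p) v < \<delta>' \<or> dir_dist (p - q) v < \<delta>') \<and>
                    dist p q > inverse (onorm (\<lambda>x. matrix_inv A *v x)) * \<bar>\<eta>\<bar>"
      using pp unfolding ob_def B_def by auto
    show "\<exists>S'. segs_union S' \<subseteq>
                   (\<lambda>p. A *v J \<eta> \<xi> (matrix_inv A *v p)) ` segs_union S \<and>
                 eps_dense (\<epsilon> + \<epsilon>') (segs_union S') (Str X (\<eta> *\<^sub>R v)) \<and>
                 (\<forall>(p,q)\<in>S'. (dir_dist (q - p) v < \<delta>' \<or> dir_dist (p - q) v < \<delta>') \<and>
                    dist p q > inverse (onorm (\<lambda>x. matrix_inv A *v x)) * \<bar>\<eta>\<bar>)"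
      using sub dens pp' unfolding T_def B_def by blast
  qed
qed

end
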